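(* Let $X$ be a unital commutative semiring. The following are equivalent: (1) the relation $\sim$ on $\mathcal{S}(X)$ is a congruence and the quotient semiring $\tilde{\mathcal{S}}(X)=\mathcal{S}(X)/\sim$ is upper-bound; (2) $X$ is idempotent, linearly ordered by its intrinsic order, and for all $a,b,x\in X$ with $a<b$ one has $ax=0$ or $ax<bx$.
   Context: A semiring $(X,+,0,\cdot)$: $(X,+,0)$ commutative monoid, $(X,\cdot)$ semigroup, distributivity, $0$ absorbing. Idempotent: $x+x=x$. Intrinsic order: $a\le b$ iff $a+x=b$ for some $x$; $a<b$ means $a\le b$, $a\ne b$; a semiring is upper-bound if its intrinsic order is antisymmetric. $\mathcal{S}(X)=X\times X$ with $(a',a'')+(b',b'')=(a'+b',a''+b'')$ and $(a',a'')(b',b'')=(a'b'+a''b'',a'b''+a''b')$. The relation $\sim$: $(a',a'')\sim(b',b'')$ iff $(a',a'')=(b',b'')$, or ($a'\ne a''$, $b'\ne b''$ and $a'+b''=a''+b'$). A congruence is an equivalence relation respecting addition and multiplication. *)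

theory Defs
  imports Main
begin

definition intr_le :: "'a::plus \<Rightarrow> 'a \<Rightarrow> bool" where
  "intr_le a b \<longleftrightarrow> (\<exists>x. a + x = b)"

definition intr_less :: "'a::plus \<Rightarrow> 'a \<Rightarrow> bool" where
  "intr_less a b \<longleftrightarrow> intr_le a b \<and> a \<noteq> b"

definition idempotent_add :: "'a::plus itself \<Rightarrow> bool" where
  "idempotent_add _ \<longleftrightarrow> (\<forall>x::'a. x + x = x)"

text \<open>Linearly ordered by the intrinsic order (reflexivity/transitivity are automatic).\<close>
definition intr_linear :: "'a::plus itself \<Rightarrow> bool" where
  "intr_linear _ \<longleftrightarrow>
     (\<forall>a b::'a. intr_le a b \<and> intr_le b a \<longrightarrow> a = b) \<and>
     (\<forall>a b::'a. intr_le a b \<or> intr_le b a)"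

definition s_add :: "'a::plus \<times> 'a \<Rightarrow> 'a \<times> 'a \<Rightarrow> 'a \<times> 'a" where
  "s_add p q = (fst p + fst q, snd p + snd q)"

definition s_mul :: "'a::{plus,times} \<times> 'a \<Rightarrow> 'a \<times> 'a \<Rightarrow> 'a \<times> 'a" where
  "s_mul p q = (fst p * fst q + snd p * snd q, fst p * snd q + snd p * fst q)"

definition sim_rel :: "('a::plus \<times> 'a) rel" where
  "sim_rel = {(p, q). p = q \<or>
      (fst p \<noteq> snd p \<and> fst q \<noteq> snd q \<and> fst p + snd q = snd p + fst q)}"

definition s_congruence :: "('a::{plus,times} \<times> 'a) rel \<Rightarrow> bool" where
  "s_congruence R \<longleftrightarrow> equiv UNIV R \<and>
     (\<forall>p q p' q'. (p, q) \<in> R \<and> (p', q') \<in> R \<longrightarrow>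
        (s_add p p', s_add q q') \<in> R \<and> (s_mul p p', s_mul q q') \<in> R)"

text \<open>Intrinsic order on the quotient S(X)/R, on equivalence classes:
  [p] \<le> [q] iff [p] + [x] = [q] for some class [x], where [p]+[x] = [p+x].\<close>
definition quot_le :: "('a::plus \<times> 'a) rel \<Rightarrow> 'a \<times> 'a \<Rightarrow> 'a \<times> 'a \<Rightarrow> bool" where
  "quot_le R p q \<longleftrightarrow> (\<exists>x. R `` {s_add p x} = R `` {q})"

definition quot_upper_bound :: "('a::plus \<times> 'a) rel \<Rightarrow> bool" where
  "quot_upper_bound R \<longleftrightarrow>
     (\<forall>p q. quot_le R p q \<and> quot_le R q p \<longrightarrow> R `` {p} = R `` {q})"

end

theory Submission
  imports Defs
begin

lemma fwd:
  fixes T :: "'a::{comm_semiring_0, comm_monoid_mult} itself"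
  assumes C: "s_congruence (sim_rel :: ('a \<times> 'a) rel)"
  shows "idempotent_add T \<and> intr_linear T \<and>
          (\<forall>a b x :: 'a. intr_less a b \<longrightarrow> a * x = 0 \<or> intr_less (a * x) (b * x))"
proof -
  have refl: "(p, p) \<in> (sim_rel :: ('a \<times> 'a) rel)" for p by (simp add: sim_rel_def)
  have addc: "(p, q) \<in> sim_rel \<Longrightarrow> (p', q') \<in> sim_rel \<Longrightarrow> (s_add p p', s_add q q') \<in> (sim_rel :: ('a \<times> 'a) rel)" for p q p' q'
    using C unfolding s_congruence_def by blast
  have mulc: "(p, q) \<in> sim_rel \<Longrightarrow> (p', q') \<in> sim_rel \<Longrightarrow> (s_mul p p', s_mul q q') \<in> (sim_rel :: ('a \<times> 'a) rel)" for p q p' q'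
    using C unfolding s_congruence_def by blast
  have idem: "x + x = x" for x :: 'a
  proof (rule ccontr)
    assume ne: "x + x \<noteq> x"
    then have "x \<noteq> 0" by auto
    then have "((x, 0), (x + x, x)) \<in> (sim_rel :: ('a \<times> 'a) rel)"
      using ne by (simp add: sim_rel_def add.commute)
    from addc[OF this refl[of "(0, x)"]]
    show False using ne by (simp add: sim_rel_def s_add_def)
  qed
  have le: "intr_le a b \<longleftrightarrow> a + b = b" for a b :: 'a
    unfolding intr_le_def
    by (metis add.assoc idem)
  have lin: "a + b = b \<or> b + a = a" for a b :: 'a
  proof (rule ccontr)
    assume n: "\<not> (a + b = b \<or> b + a = a)"
    define c where "c = a + b"
    have cb: "c \<noteq> b" "a \<noteq> c" using n by (auto simp: c_def add.commute)
    have "((c, b), (a, c)) \<in> (sim_rel :: ('a \<times> 'a) rel)"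
      using cb by (simp add: sim_rel_def c_def idem add.commute)
    from addc[OF this refl[of "(b, 0)"]]
    have "((c + b, b), (a + b, c)) \<in> (sim_rel :: ('a \<times> 'a) rel)" by (simp add: s_add_def)
    moreover have "c + b = c" by (simp add: c_def add.assoc idem)
    ultimately show False using cb by (simp add: sim_rel_def c_def)
  qed
  have strict: "a * x = 0 \<or> intr_less (a * x) (b * x)" if "intr_less a b" for a b x :: 'a
  proof (rule ccontr)
    assume n: "\<not> (a * x = 0 \<or> intr_less (a * x) (b * x))"
    have ab: "a + b = b" "a \<noteq> b" using that le by (auto simp: intr_less_def)
    have "a * x + b * x = b * x" using ab by (metis distrib_right)
    then have eq: "a * x = b * x" using n le by (auto simp: intr_less_def)
    have "b \<noteq> 0" using ab by auto
    then have "((b, 0), (b, a)) \<in> (sim_rel :: ('a \<times> 'a) rel)"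
      using ab by (simp add: sim_rel_def add.commute)
    from mulc[OF this refl[of "(x, 0)"]]
    show False using n eq by (simp add: sim_rel_def s_mul_def)
  qed
  show ?thesis
    unfolding idempotent_add_def intr_linear_def
    using idem le lin strict by (metis add.commute)
qed

definition tt :: "'a::plus \<times> 'a \<Rightarrow> 'a" where "tt p = fst p + snd p"
definition canon :: "'a::{plus,zero} \<times> 'a \<Rightarrow> 'a \<times> 'a" where
  "canon p = (if snd p + fst p = fst p then (tt p, 0) else (0, tt p))"
definition FF :: "'a::{plus,zero} \<times> 'a \<Rightarrow> 'a \<times> 'a" where
  "FF p = (if fst p \<noteq> snd p then canon p else p)"

context
  fixes T :: "'a::{comm_semiring_0, comm_monoid_mult} itself"
  assumes idem: "\<And>x::'a. x + x = x"
    and lin: "\<And>a b::'a. a + b = a \<or> a + b = b"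
    and strict: "\<And>a b x::'a. a + b = b \<Longrightarrow> a \<noteq> b \<Longrightarrow> a * x = 0 \<or> a * x \<noteq> b * x"
begin

lemma tt0: fixes a b :: 'a assumes "a \<noteq> b" shows "a + b \<noteq> 0"
proof
  assume h: "a + b = 0"
  have "a = a + (a + b)" by (simp add: h)
  also have "\<dots> = a + b" by (metis add.assoc idem)
  finally have "a = 0" using h by simp
  moreover have "b = b + (a + b)" by (simp add: h)
  moreover have "b + (a + b) = a + b" by (metis add.assoc add.commute idem)
  ultimately show False using assms h by simp
qed

lemma simF: fixes a b c d :: 'a
  shows "((a, b), (c, d)) \<in> sim_rel \<longleftrightarrow> FF (a, b) = FF (c, d)"
  using tt0[of a b] tt0[of c d] unfolding sim_rel_def FF_def canon_def tt_def
  by (smt (verit) lin idem add.assoc add.commute add_0 fst_conv snd_conv prod.inject case_prod_conv mem_Collect_eq)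

lemma addF: fixes a b c d :: 'a
  shows "FF (s_add (a, b) (c, d)) = FF (s_add (FF (a, b)) (c, d))"
  unfolding FF_def canon_def tt_def s_add_def
  by (smt (verit) lin idem add.assoc add.commute add_0 fst_conv snd_conv)

lemma mono: fixes a b x :: 'a shows "a + b = b \<Longrightarrow> a * x + b * x = b * x"
  by (metis distrib_right)

lemma mulF: fixes a b c d :: 'a
  shows "FF (s_mul (a, b) (c, d)) = FF (s_mul (FF (a, b)) (c, d))"
  using mono[of a b c] mono[of a b d] mono[of b a c] mono[of b a d]
     mono[of c d a] mono[of d c a] mono[of c d b] mono[of d c b]
     strict[of a b c] strict[of a b d] strict[of b a c] strict[of b a d]
     strict[of c d a] strict[of d c a] strict[of c d b] strict[of d c b]
     lin[of a b] lin[of c d]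
  unfolding FF_def canon_def tt_def s_mul_def
  by (smt (verit) lin idem add.assoc add.commute add_0 fst_conv snd_conv mult.commute mult_zero_left mult_zero_right distrib_left distrib_right)

lemma simFF: "(p, q) \<in> (sim_rel :: ('a \<times> 'a) rel) \<longleftrightarrow> FF p = FF q"
  using simF[of "fst p" "snd p" "fst q" "snd q"] by simp

lemma addFF: "FF (s_add p r) = FF (s_add (FF p) (r :: 'a \<times> 'a))"
  using addF[of "fst p" "snd p" "fst r" "snd r"] by simp

lemma mulFF: "FF (s_mul p r) = FF (s_mul (FF p) (r :: 'a \<times> 'a))"
  using mulF[of "fst p" "snd p" "fst r" "snd r"] by simp

lemma s_add_comm: "s_add p q = s_add q (p :: 'a \<times> 'a)"
  by (simp add: s_add_def add.commute)

lemma s_mul_comm: "s_mul p q = s_mul q (p :: 'a \<times> 'a)"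
  by (simp add: s_mul_def add.commute mult.commute)

lemma ttF: "tt (FF p) = tt (p :: 'a \<times> 'a)"
  by (simp add: FF_def canon_def tt_def add.commute)

lemma tt_add: "tt (s_add p x) = tt p + tt (x :: 'a \<times> 'a)"
  by (simp add: tt_def s_add_def add.assoc add.left_commute)

lemma keyE: fixes a b c d :: 'a
  assumes "(c + d) + (a + b) = a + b"
  shows "FF (s_add (a, b) (c, d)) = FF (a, b) \<or> FF (s_add (a, b) (c, d)) = (a + b, a + b)"
  using assms unfolding FF_def canon_def tt_def s_add_def
  by (smt (verit) lin idem add.assoc add.commute add_0 fst_conv snd_conv)

lemma key: "tt x + tt p = tt p \<Longrightarrow> FF (s_add p x) = FF p \<or> FF (s_add p x) = (tt p, tt (p :: 'a \<times> 'a))"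
  using keyE[of "fst x" "snd x" "fst p" "snd p"] by (simp add: tt_def)

lemma img: "(sim_rel :: ('a \<times> 'a) rel) `` {a} = sim_rel `` {b} \<longleftrightarrow> FF a = FF b"
proof -
  have m: "b \<in> (sim_rel :: ('a \<times> 'a) rel) `` {b}" by (simp add: simFF)
  show ?thesis
  proof
    assume "(sim_rel :: ('a \<times> 'a) rel) `` {a} = sim_rel `` {b}"
    with m have "(a, b) \<in> (sim_rel :: ('a \<times> 'a) rel)" by (metis Image_singleton_iff)
    then show "FF a = FF b" by (simp only: simFF)
  next
    assume "FF a = FF b"
    then show "(sim_rel :: ('a \<times> 'a) rel) `` {a} = sim_rel `` {b}"
      by (auto simp: simFF)
  qed
qed

lemma congr: "s_congruence (sim_rel :: ('a \<times> 'a) rel)"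
  unfolding s_congruence_def
proof (intro conjI allI impI)
  show "equiv UNIV (sim_rel :: ('a \<times> 'a) rel)"
    by (auto simp: equiv_def refl_on_def sym_def trans_def simFF)
next
  fix p q p' q' :: "'a \<times> 'a"
  assume h: "(p, q) \<in> sim_rel \<and> (p', q') \<in> sim_rel"
  then have e: "FF p = FF q" "FF p' = FF q'" by (auto simp: simFF)
  have "FF (s_add p p') = FF (s_add q p')" by (metis addFF e(1))
  also have "\<dots> = FF (s_add q q')" by (metis addFF e(2) s_add_comm)
  finally show "(s_add p p', s_add q q') \<in> sim_rel" by (simp add: simFF)
  have "FF (s_mul p p') = FF (s_mul q p')" by (metis mulFF e(1))
  also have "\<dots> = FF (s_mul q q')" by (metis mulFF e(2) s_mul_comm)
  finally show "(s_mul p p', s_mul q q') \<in> sim_rel" by (simp add: simFF)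
qed

lemma ub: "quot_upper_bound (sim_rel :: ('a \<times> 'a) rel)"
  unfolding quot_upper_bound_def quot_le_def img
proof (intro allI impI)
  fix p q :: "'a \<times> 'a"
  assume "(\<exists>x. FF (s_add p x) = FF q) \<and> (\<exists>x. FF (s_add q x) = FF p)"
  then obtain x y where x: "FF (s_add p x) = FF q" and y: "FF (s_add q y) = FF p" by blast
  have tq: "tt q = tt p + tt x" by (metis x ttF tt_add)
  have tp: "tt p = tt q + tt y" by (metis y ttF tt_add)
  have "tt p = tt q"
    by (metis tp tq add.assoc add.commute idem)
  then have tx: "tt x + tt p = tt p" "tt y + tt q = tt q"
    by (metis add.commute tq tp)+
  from key[OF tx(1)] key[OF tx(2)] x y \<open>tt p = tt q\<close>
  show "FF p = FF q" by auto
qed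

end

theorem lemma6p3:
  fixes T :: "'a::{comm_semiring_0, comm_monoid_mult} itself"
  shows "(s_congruence (sim_rel :: ('a \<times> 'a) rel) \<and> quot_upper_bound (sim_rel :: ('a \<times> 'a) rel))
     \<longleftrightarrow> (idempotent_add T \<and> intr_linear T \<and>
          (\<forall>a b x :: 'a. intr_less a b \<longrightarrow> a * x = 0 \<or> intr_less (a * x) (b * x)))"
proof
  assume "s_congruence (sim_rel :: ('a \<times> 'a) rel) \<and> quot_upper_bound (sim_rel :: ('a \<times> 'a) rel)"
  then show "idempotent_add T \<and> intr_linear T \<and>
          (\<forall>a b x :: 'a. intr_less a b \<longrightarrow> a * x = 0 \<or> intr_less (a * x) (b * x))"
    using fwd by blast
next
  assume H: "idempotent_add T \<and> intr_linear T \<and>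
          (\<forall>a b x :: 'a. intr_less a b \<longrightarrow> a * x = 0 \<or> intr_less (a * x) (b * x))"
  have idem: "\<And>x::'a. x + x = x" using H by (simp add: idempotent_add_def)
  have le: "intr_le a b \<longleftrightarrow> a + b = b" for a b :: 'a
    unfolding intr_le_def by (metis add.assoc idem)
  have lin: "\<And>a b::'a. a + b = a \<or> a + b = b"
    using H le unfolding intr_linear_def by (metis add.commute)
  have strict: "\<And>a b x::'a. a + b = b \<Longrightarrow> a \<noteq> b \<Longrightarrow> a * x = 0 \<or> a * x \<noteq> b * x"
    using H le unfolding intr_less_def by blast
  show "s_congruence (sim_rel :: ('a \<times> 'a) rel) \<and> quot_upper_bound (sim_rel :: ('a \<times> 'a) rel)"
    using congr[OF idem lin strict] ub[OF idem lin strict] by blast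
qed

end
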